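(* Let $M\ge 2$, let $k\in\{1,\dots,M\}$, and let $\mathbf V_1,\ldots,\mathbf V_M\in\mathbb C^{M\times M}$ be Hermitian positive definite matrices. For $\mathbf u\in\mathbb C^M$ and $\mathbf q\in\mathbb C^{M-1}$ define $$\mathbf T_k(\mathbf u,\mathbf q)=\mathbf I+\mathbf e_k(\mathbf u-\mathbf e_k)^{\mathsf H}+\bar{\mathbf E}_k\mathbf q^{*}\mathbf e_k^{\top},$$ $$\ell_2(\mathbf u,\mathbf q)=\sum_{m\neq k}(\mathbf e_m+q_m\mathbf e_k)^{\mathsf H}\mathbf V_m(\mathbf e_m+q_m\mathbf e_k)+\mathbf u^{\mathsf H}\mathbf V_k\mathbf u-2\log\left|\det\mathbf T_k(\mathbf u,\mathbf q)\right|,$$ and consider the problem $\min_{\mathbf u\in\mathbb C^M,\ \mathbf q\in\mathbb C^{M-1}}\ell_2(\mathbf u,\mathbf q)$. Then: (1) For a given $\mathbf q$, the optimal vector $\mathbf u^\star(\mathbf q)$ is $$\mathbf u^\star(\mathbf q)=\frac{\mathbf V_k^{-1}\tilde{\mathbf q}_k}{\sqrt{\tilde{\mathbf q}_k^{\mathsf H}\mathbf V_k^{-1}\tilde{\mathbf q}_k}}\,e^{j\theta},\qquad \tilde{\mathbf q}_k=\mathbf e_k-\bar{\mathbf E}_k\mathbf q^{*},$$ where $\theta\in[0,2\pi]$ is an arbitrary phase. (2) The optimal $\mathbf q^\star$ is the solution of $$\min_{\mathbf q\in\mathbb C^{M-1}}\ (\mathbf q+\mathbf A^{-1}\mathbf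 b)^{\mathsf H}\mathbf A(\mathbf q+\mathbf A^{-1}\mathbf b)-\log\!\left((\mathbf q-\mathbf C^{-1}\mathbf g)^{\mathsf H}\mathbf C(\mathbf q-\mathbf C^{-1}\mathbf g)+z\right),$$ where $\mathbf A=\operatorname{diag}(\mathbf e_k^\top\mathbf V_m\mathbf e_k)_{m\neq k}$, $\mathbf b=(\mathbf e_k^\top\mathbf V_m\mathbf e_m)_{m\neq k}\in\mathbb C^{M-1}$, $\mathbf C=\bar{\mathbf E}_k^\top(\mathbf V_k^{-1})^{*}\bar{\mathbf E}_k$, $\mathbf g=\bar{\mathbf E}_k^\top(\mathbf V_k^{-1})^{*}\mathbf e_k$, and $z=\mathbf e_k^\top(\mathbf V_k^{-1})^{*}\mathbf e_k-\mathbf g^{\mathsf H}\mathbf C^{-1}\mathbf g$.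
   Context: $\mathbf e_1,\dots,\mathbf e_M$ are the canonical basis vectors of $\mathbb C^M$, $\mathbf I$ is the $M\times M$ identity, and $\bar{\mathbf E}_k=[\mathbf e_1\ \cdots\ \mathbf e_{k-1}\ \mathbf e_{k+1}\ \cdots\ \mathbf e_M]$ is the $M\times(M-1)$ matrix of all canonical basis vectors except the $k$-th. The entries of $\mathbf q\in\mathbb C^{M-1}$ are indexed as $q_m$, $m\in\{1,\dots,M\}\setminus\{k\}$, in increasing order of $m$; vectors and diagonal matrices indexed by $m\neq k$ are ordered likewise. $\mathbf x^{*}$ denotes entrywise complex conjugation, $^{\mathsf H}$ conjugate transpose, $^\top$ transpose, and $j=\sqrt{-1}$. *)

theory Defs
  imports Complex_Main "Jordan_Normal_Form.Matrix" "Jordan_Normal_Form.Determinant"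
          "Jordan_Normal_Form.Gauss_Jordan_Elimination"
begin

(* Indices are 0-based: rows/columns 0..M-1, k < M (paper: 1..M). *)

definition cconj_mat :: "complex mat \<Rightarrow> complex mat" where
  "cconj_mat A = map_mat cnj A"

definition hadj :: "complex mat \<Rightarrow> complex mat" where
  "hadj A = transpose_mat (cconj_mat A)"

definition cconj_vec :: "complex vec \<Rightarrow> complex vec" where
  "cconj_vec v = map_vec cnj v"

definition colm :: "complex vec \<Rightarrow> complex mat" where
  "colm v = mat (dim_vec v) 1 (\<lambda>(i,j). v $ i)"

definition qform :: "complex vec \<Rightarrow> complex mat \<Rightarrow> complex" where
  "qform x V = cconj_vec x \<bullet> (V *\<^sub>v x)"

definition hermitian_pd :: "nat \<Rightarrow> complex mat \<Rightarrow> bool" where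
  "hermitian_pd M V \<longleftrightarrow> V \<in> carrier_mat M M \<and> hadj V = V \<and>
     (\<forall>x \<in> carrier_vec M. x \<noteq> 0\<^sub>v M \<longrightarrow> Re (qform x V) > 0)"

definition minv :: "complex mat \<Rightarrow> complex mat" where
  "minv A = the (mat_inverse A)"

(* the m-th index (m \<noteq> k) corresponding to position j of a vector in C^(M-1) *)
definition idx :: "nat \<Rightarrow> nat \<Rightarrow> nat" where
  "idx k j = (if j < k then j else Suc j)"

definition Ebar :: "nat \<Rightarrow> nat \<Rightarrow> complex mat" where
  "Ebar M k = mat M (M - 1) (\<lambda>(i,j). if i = idx k j then 1 else 0)"

(* entry q_m (m \<noteq> k) of q \<in> C^(M-1) *)
definition qent :: "nat \<Rightarrow> complex vec \<Rightarrow> nat \<Rightarrow> complex" where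
  "qent k q m = q $ (if m < k then m else m - 1)"

definition Tk :: "nat \<Rightarrow> nat \<Rightarrow> complex vec \<Rightarrow> complex vec \<Rightarrow> complex mat" where
  "Tk M k u q = 1\<^sub>m M + colm (unit_vec M k) * hadj (colm (u - unit_vec M k))
      + Ebar M k * colm (cconj_vec q) * transpose_mat (colm (unit_vec M k))"

definition ell2 :: "nat \<Rightarrow> nat \<Rightarrow> (nat \<Rightarrow> complex mat) \<Rightarrow> complex vec \<Rightarrow> complex vec \<Rightarrow> real" where
  "ell2 M k V u q =
     Re (\<Sum>m \<in> {0..<M} - {k}. qform (unit_vec M m + qent k q m \<cdot>\<^sub>v unit_vec M k) (V m))
     + Re (qform u (V k)) - 2 * ln (cmod (det (Tk M k u q)))"

definition qtil :: "nat \<Rightarrow> nat \<Rightarrow> complex vec \<Rightarrow> complex vec" where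
  "qtil M k q = unit_vec M k - Ebar M k *\<^sub>v cconj_vec q"

definition Amat :: "nat \<Rightarrow> nat \<Rightarrow> (nat \<Rightarrow> complex mat) \<Rightarrow> complex mat" where
  "Amat M k V = mat_diag (M - 1) (\<lambda>j. V (idx k j) $$ (k, k))"

definition bvec :: "nat \<Rightarrow> nat \<Rightarrow> (nat \<Rightarrow> complex mat) \<Rightarrow> complex vec" where
  "bvec M k V = vec (M - 1) (\<lambda>j. V (idx k j) $$ (k, idx k j))"

definition Cmat :: "nat \<Rightarrow> nat \<Rightarrow> (nat \<Rightarrow> complex mat) \<Rightarrow> complex mat" where
  "Cmat M k V = transpose_mat (Ebar M k) * cconj_mat (minv (V k)) * Ebar M k"

definition gvec :: "nat \<Rightarrow> nat \<Rightarrow> (nat \<Rightarrow> complex mat) \<Rightarrow> complex vec" where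
  "gvec M k V = transpose_mat (Ebar M k) *\<^sub>v (cconj_mat (minv (V k)) *\<^sub>v unit_vec M k)"

definition zval :: "nat \<Rightarrow> nat \<Rightarrow> (nat \<Rightarrow> complex mat) \<Rightarrow> complex" where
  "zval M k V = cconj_mat (minv (V k)) $$ (k, k)
     - qform (gvec M k V) (minv (Cmat M k V))"

definition fq :: "nat \<Rightarrow> nat \<Rightarrow> (nat \<Rightarrow> complex mat) \<Rightarrow> complex vec \<Rightarrow> real" where
  "fq M k V q =
     Re (qform (q + minv (Amat M k V) *\<^sub>v bvec M k V) (Amat M k V))
     - ln (Re (qform (q - minv (Cmat M k V) *\<^sub>v gvec M k V) (Cmat M k V) + zval M k V))"

end

theory Submission
  imports Defs
begin

lemma det_rowk:
  assumes k: "k < n"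
  shows "det (mat n n (\<lambda>(i,j). if i = k then r j else if i = j then 1 else (0::complex))) = r k"
proof -
  define A where "A = mat n n (\<lambda>(i,j). if i = k then r j else if i = j then 1 else (0::complex))"
  define L where "L = mat n n (\<lambda>(i,j). if i = k then (if j < k then r j else if j = k then 1 else 0) else if i = j then 1 else (0::complex))"
  define U where "U = mat n n (\<lambda>(i,j). if i = k then (if k \<le> j then r j else 0) else if i = j then 1 else (0::complex))"
  have L: "L \<in> carrier_mat n n" and U: "U \<in> carrier_mat n n" unfolding L_def U_def by auto
  have "A = L * U"
  proof (rule eq_matI)
    fix i j assume i: "i < dim_row (L * U)" and j: "j < dim_col (L * U)"
    hence i: "i < n" and j: "j < n" using L U by auto
    have "(L * U) $$ (i,j) = (\<Sum>l\<in>{0..<n}. L $$ (i,l) * U $$ (l,j))"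
      using i j L U by (simp add: scalar_prod_def)
    also have "\<dots> = (\<Sum>l\<in>{0..<n}. (if l = j then (if i = k then (if j < k then r j else 0) else (if i = j then 1 else 0)) else 0)
         + (if l = k then (if i = k then (if k \<le> j then r j else 0) else 0) else 0))"
      by (rule sum.cong, simp, auto simp: L_def U_def i j)
    also have "\<dots> = (if i = k then (if j < k then r j else 0) else (if i = j then 1 else 0)) + (if i = k then (if k \<le> j then r j else 0) else 0)"
      by (simp add: sum.distrib i j k)
    also have "\<dots> = A $$ (i,j)" by (auto simp: A_def U_def i j)
    finally show "A $$ (i,j) = (L * U) $$ (i,j)" by simp
  qed (insert L U, auto simp: A_def)
  hence "det A = det L * det U" using det_mult[OF L U] by simp
  moreover have "det L = 1"
    by (subst det_lower_triangular[OF _ L], auto simp: L_def prod_list_diag_prod intro!: prod.neutral)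
  moreover have "det U = r k"
  proof -
    have "det U = (\<Prod>i\<in>{0..<n}. U $$ (i,i))"
      by (subst det_upper_triangular[OF _ U], auto simp: U_def upper_triangular_def prod_list_diag_prod)
    also have "\<dots> = (\<Prod>i\<in>{0..<n}. if i = k then r k else 1)"
      by (rule prod.cong, auto simp: U_def)
    also have "\<dots> = r k" using k by simp
    finally show ?thesis .
  qed
  ultimately show ?thesis by (simp add: A_def)
qed

definition ridx :: "nat \<Rightarrow> nat \<Rightarrow> nat" where
  "ridx k i = (if i < k then i else i - 1)"

lemma idx_facts:
  assumes "k < M" "j < M - 1"
  shows "idx k j < M" "idx k j \<noteq> k" "ridx k (idx k j) = j"
  using assms by (auto simp: idx_def ridx_def)

lemma ridx_facts:
  assumes "k < M" "i < M" "i \<noteq> k"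
  shows "ridx k i < M - 1" "idx k (ridx k i) = i"
  using assms by (auto simp: idx_def ridx_def)

lemma idx_eq_iff: "i \<noteq> k \<Longrightarrow> (i = idx k j) = (j = ridx k i)"
  by (auto simp: idx_def ridx_def)

lemma qent_ridx: "qent k q i = q $ ridx k i"
  by (simp add: qent_def ridx_def)

lemma Ebar_carrier: "Ebar M k \<in> carrier_mat M (M - 1)"
  by (simp add: Ebar_def)

lemma Ebar_mult_vec:
  assumes k: "k < M" and x: "x \<in> carrier_vec (M - 1)"
  shows "Ebar M k *\<^sub>v x = vec M (\<lambda>i. if i = k then 0 else x $ ridx k i)"
proof (rule eq_vecI)
  fix i assume "i < dim_vec (vec M (\<lambda>i. if i = k then 0 else x $ ridx k i))"
  hence i: "i < M" by simp
  have "(Ebar M k *\<^sub>v x) $ i = (\<Sum>j\<in>{0..<M-1}. (if i = idx k j then 1 else 0) * x $ j)"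
    using i x by (simp add: Ebar_def scalar_prod_def)
  also have "\<dots> = (if i = k then 0 else x $ ridx k i)"
  proof (cases "i = k")
    case True
    then show ?thesis using idx_facts[OF k] by (auto intro!: sum.neutral, metis)
  next
    case False
    have "(\<Sum>j\<in>{0..<M-1}. (if i = idx k j then 1 else 0) * x $ j) = (\<Sum>j\<in>{0..<M-1}. if j = ridx k i then x $ j else 0)"
      by (rule sum.cong, auto simp: idx_eq_iff[OF False])
    also have "\<dots> = x $ ridx k i" using ridx_facts[OF k i False] by simp
    finally show ?thesis using False by simp
  qed
  finally show "(Ebar M k *\<^sub>v x) $ i = vec M (\<lambda>i. if i = k then 0 else x $ ridx k i) $ i" using i by simp
qed (simp add: Ebar_def)

lemma EbarT_mult_vec:
  assumes k: "k < M" and y: "y \<in> carrier_vec M"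
  shows "transpose_mat (Ebar M k) *\<^sub>v y = vec (M - 1) (\<lambda>j. y $ idx k j)"
proof (rule eq_vecI)
  fix j assume "j < dim_vec (vec (M - 1) (\<lambda>j. y $ idx k j))"
  hence j: "j < M - 1" by simp
  have "(transpose_mat (Ebar M k) *\<^sub>v y) $ j = (\<Sum>i\<in>{0..<M}. (if i = idx k j then 1 else 0) * y $ i)"
    using j y by (simp add: Ebar_def scalar_prod_def)
  also have "\<dots> = (\<Sum>i\<in>{0..<M}. if i = idx k j then y $ i else 0)" by (rule sum.cong, auto)
  also have "\<dots> = y $ idx k j" using idx_facts[OF k j] by simp
  finally show "(transpose_mat (Ebar M k) *\<^sub>v y) $ j = vec (M - 1) (\<lambda>j. y $ idx k j) $ j" using j by simp
qed (simp add: Ebar_def)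

lemma col_colm: "x \<in> carrier_vec n \<Longrightarrow> col (colm x) 0 = x"
  by (rule eq_vecI, auto simp: colm_def col_def)

lemma colm_dims[simp]: "dim_row (colm x) = dim_vec x" "dim_col (colm x) = 1"
  by (auto simp: colm_def)

lemma colm_index: "i < dim_vec x \<Longrightarrow> colm x $$ (i, 0) = x $ i"
  by (auto simp: colm_def)

lemma Tk_explicit:
  assumes k: "k < M" and u: "u \<in> carrier_vec M" and q: "q \<in> carrier_vec (M - 1)"
  shows "Tk M k u q = mat M M (\<lambda>(i,j). if i = k then cnj (u $ j)
            else (if i = j then 1 else 0) + (if j = k then cnj (q $ ridx k i) else 0))"
proof -
  have cq: "cconj_vec q \<in> carrier_vec (M - 1)" using q by (simp add: cconj_vec_def)
  have vv: "vec (M - 1) (($) (cconj_vec q)) = cconj_vec q" by (rule eq_vecI, insert cq, auto)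
  have e1: "Ebar M k * colm (cconj_vec q) = colm (Ebar M k *\<^sub>v cconj_vec q)"
    by (rule eq_matI, insert cq, auto simp: col_colm[OF cq] colm_dims colm_index Ebar_def)
  show ?thesis unfolding Tk_def e1 Ebar_mult_vec[OF k cq]
    by (rule eq_matI, insert u q k, auto simp: colm_def hadj_def cconj_mat_def cconj_vec_def ridx_facts(1)[OF k, simplified] scalar_prod_def)
qed

lemma det_Tk:
  assumes k: "k < M" and u: "u \<in> carrier_vec M" and q: "q \<in> carrier_vec (M - 1)"
  shows "det (Tk M k u q) = cnj (u $ k) - (\<Sum>i\<in>{0..<M}-{k}. cnj (u $ i) * cnj (q $ ridx k i))"
proof -
  define cq where "cq i = cnj (q $ ridx k i)" for i
  define d where "d = cnj (u $ k) - (\<Sum>i\<in>{0..<M}-{k}. cnj (u $ i) * cq i)"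
  define T where "T = Tk M k u q"
  have T: "T = mat M M (\<lambda>(i,j). if i = k then cnj (u $ j)
            else (if i = j then 1 else 0) + (if j = k then cq i else 0))"
    unfolding T_def Tk_explicit[OF k u q] cq_def by simp
  define P where "P = mat M M (\<lambda>(i,j). if i = k then (if j = k then 1 else - cnj (u $ j)) else if i = j then 1 else (0::complex))"
  define N where "N = mat M M (\<lambda>(i,j). if i = k then (if j = k then d else 0)
            else (if i = j then 1 else 0) + (if j = k then cq i else 0))"
  have Pc: "P \<in> carrier_mat M M" and Tc: "T \<in> carrier_mat M M" and Nc: "N \<in> carrier_mat M M"
    unfolding P_def T N_def by auto
  have detP: "det P = 1"
    using det_rowk[OF k, of "\<lambda>j. if j = k then 1 else - cnj (u $ j)"] unfolding P_def by simp
  have "transpose_mat N = mat M M (\<lambda>(i,j). if i = k then (\<lambda>j. if j = k then d else cq j) j else if i = j then 1 else 0)"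
    by (rule eq_matI, auto simp: N_def)
  hence detN: "det N = d"
    using det_rowk[OF k, of "\<lambda>j. if j = k then d else cq j"] det_transpose[OF Nc] by simp
  have PT: "P * T = N"
  proof (rule eq_matI)
    fix i j assume "i < dim_row N" "j < dim_col N"
    hence i: "i < M" and j: "j < M" using Nc by auto
    have e: "(P * T) $$ (i,j) = (\<Sum>l\<in>{0..<M}. P $$ (i,l) * T $$ (l,j))"
      using i j Pc Tc by (simp add: scalar_prod_def)
    show "(P * T) $$ (i,j) = N $$ (i,j)"
    proof (cases "i = k")
      case False
      have "(\<Sum>l\<in>{0..<M}. P $$ (i,l) * T $$ (l,j)) = (\<Sum>l\<in>{0..<M}. if l = i then T $$ (i,j) else 0)"
        by (rule sum.cong, auto simp: P_def i False)
      also have "\<dots> = N $$ (i,j)" using i j False by (simp add: T N_def)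
      finally show ?thesis using e by simp
    next
      case True
      have fin: "finite {0..<M}" by simp
      have "(\<Sum>l\<in>{0..<M}. P $$ (i,l) * T $$ (l,j)) = P $$ (i,k) * T $$ (k,j) + (\<Sum>l\<in>{0..<M}-{k}. P $$ (i,l) * T $$ (l,j))"
        using k by (subst sum.remove[OF fin, of k], auto)
      also have "P $$ (i,k) * T $$ (k,j) = cnj (u $ j)" using True k j by (simp add: P_def T)
      also have "(\<Sum>l\<in>{0..<M}-{k}. P $$ (i,l) * T $$ (l,j)) = (\<Sum>l\<in>{0..<M}-{k}. - cnj (u $ l) * ((if l = j then 1 else 0) + (if j = k then cq l else 0)))"
        by (rule sum.cong, auto simp: P_def T True j k)
      finally have e2: "(P * T) $$ (i,j) = cnj (u $ j) + (\<Sum>l\<in>{0..<M}-{k}. - cnj (u $ l) * ((if l = j then 1 else 0) + (if j = k then cq l else 0)))"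
        using e by simp
      show ?thesis
      proof (cases "j = k")
        case True
        have "(\<Sum>l\<in>{0..<M}-{k}. - cnj (u $ l) * ((if l = j then 1 else 0) + (if j = k then cq l else 0)))
           = - (\<Sum>l\<in>{0..<M}-{k}. cnj (u $ l) * cq l)"
          by (subst sum_negf[symmetric], rule sum.cong, auto simp: True)
        thus ?thesis using e2 True \<open>i = k\<close> k by (simp add: N_def d_def)
      next
        case False
        have "(\<Sum>l\<in>{0..<M}-{k}. - cnj (u $ l) * ((if l = j then 1 else 0) + (if j = k then cq l else 0)))
           = (\<Sum>l\<in>{0..<M}-{k}. if l = j then - cnj (u $ j) else 0)"
          by (rule sum.cong, auto simp: False)
        also have "\<dots> = - cnj (u $ j)" using False j by simp
        finally show ?thesis using e2 False \<open>i = k\<close> j k by (simp add: N_def)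
      qed
    qed
  qed (insert Nc Pc Tc, auto)
  have "det P * det T = det N" using det_mult[OF Pc Tc] PT by simp
  hence "det T = d" using detP detN by simp
  thus ?thesis unfolding T_def d_def cq_def .
qed


lemma cconj_vec_dim[simp]: "dim_vec (cconj_vec x) = dim_vec x"
  by (simp add: cconj_vec_def)

lemma cconj_vec_index[simp]: "i < dim_vec x \<Longrightarrow> cconj_vec x $ i = cnj (x $ i)"
  by (simp add: cconj_vec_def)

lemma cconj_vec_carrier[simp]: "cconj_vec x \<in> carrier_vec n \<longleftrightarrow> x \<in> carrier_vec n"
  unfolding carrier_vec_def by simp

lemma cconj_add: "x \<in> carrier_vec n \<Longrightarrow> y \<in> carrier_vec n \<Longrightarrow> cconj_vec (x + y) = cconj_vec x + cconj_vec y"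
  by (rule eq_vecI, auto)

lemma cconj_minus: "x \<in> carrier_vec n \<Longrightarrow> y \<in> carrier_vec n \<Longrightarrow> cconj_vec (x - y) = cconj_vec x - cconj_vec y"
  by (rule eq_vecI, auto)

lemma cconj_smult: "cconj_vec (a \<cdot>\<^sub>v x) = cnj a \<cdot>\<^sub>v cconj_vec x"
  by (rule eq_vecI, auto)

lemma cconj_cconj[simp]: "cconj_vec (cconj_vec x) = x"
  by (rule eq_vecI, auto)

lemma scalar_cnj: "x \<in> carrier_vec n \<Longrightarrow> y \<in> carrier_vec n \<Longrightarrow> cnj (x \<bullet> y) = cconj_vec x \<bullet> cconj_vec y"
  by (auto simp: scalar_prod_def cnj_sum intro!: sum.cong)

lemma cconj_mult_mat_vec: "A \<in> carrier_mat n m \<Longrightarrow> x \<in> carrier_vec m \<Longrightarrow>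
   cconj_vec (A *\<^sub>v x) = cconj_mat A *\<^sub>v cconj_vec x"
  by (rule eq_vecI, auto simp: cconj_mat_def scalar_prod_def cnj_sum row_def intro!: sum.cong)

lemma herm_cconj: "A \<in> carrier_mat n n \<Longrightarrow> hadj A = A \<Longrightarrow> cconj_mat A = transpose_mat A"
  unfolding hadj_def by (metis transpose_transpose)

lemma herm_adj:
  assumes A: "A \<in> carrier_mat n n" and h: "hadj A = A" and x: "x \<in> carrier_vec n" and y: "y \<in> carrier_vec n"
  shows "cconj_vec x \<bullet> (A *\<^sub>v y) = cconj_vec (A *\<^sub>v x) \<bullet> y"
proof -
  have "cconj_vec (A *\<^sub>v x) = transpose_mat A *\<^sub>v cconj_vec x"
    using cconj_mult_mat_vec[OF A x] herm_cconj[OF A h] by simp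
  thus ?thesis using transpose_vec_mult_scalar[OF A y, of "cconj_vec x"] x by simp
qed

lemma herm_real:
  assumes A: "A \<in> carrier_mat n n" and h: "hadj A = A" and x: "x \<in> carrier_vec n"
  shows "cnj (qform x A) = qform x A"
proof -
  have Ax: "A *\<^sub>v x \<in> carrier_vec n" using A x by simp
  have "cnj (qform x A) = x \<bullet> cconj_vec (A *\<^sub>v x)"
    unfolding qform_def using scalar_cnj[of "cconj_vec x" n "A *\<^sub>v x"] x Ax by simp
  also have "\<dots> = cconj_vec (A *\<^sub>v x) \<bullet> x" using comm_scalar_prod[OF x, of "cconj_vec (A *\<^sub>v x)"] Ax by simp
  also have "\<dots> = qform x A" unfolding qform_def using herm_adj[OF A h x x] by simp
  finally show ?thesis .
qed

lemma herm_real': "A \<in> carrier_mat n n \<Longrightarrow> hadj A = A \<Longrightarrow> x \<in> carrier_vec n \<Longrightarrow>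
   qform x A = complex_of_real (Re (qform x A))"
proof -
  assume a: "A \<in> carrier_mat n n" "hadj A = A" "x \<in> carrier_vec n"
  have "Im (cnj (qform x A)) = Im (qform x A)" using herm_real[OF a] by simp
  hence "Im (qform x A) = 0" by simp
  thus ?thesis by (simp add: complex_eq_iff)
qed

lemma pd_inv:
  assumes "hermitian_pd n V"
  shows "minv V \<in> carrier_mat n n" "V * minv V = 1\<^sub>m n" "minv V * V = 1\<^sub>m n"
proof -
  have V: "V \<in> carrier_mat n n" and pos: "\<And>x. x \<in> carrier_vec n \<Longrightarrow> x \<noteq> 0\<^sub>v n \<Longrightarrow> Re (qform x V) > 0"
    using assms unfolding hermitian_pd_def by auto
  have "det V \<noteq> 0"
  proof
    assume "det V = 0"
    then obtain v where v: "v \<in> carrier_vec n" "v \<noteq> 0\<^sub>v n" "V *\<^sub>v v = 0\<^sub>v n"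
      using det_0_iff_vec_prod_zero[OF V] by auto
    have "qform v V = 0" unfolding qform_def v(3) using v(1) by simp
    thus False using pos[OF v(1,2)] by simp
  qed
  hence "V \<in> Units (ring_mat TYPE(complex) n n)" using det_non_zero_imp_unit[OF V] by auto
  then obtain B where B: "mat_inverse V = Some B" using mat_inverse(1)[OF V, of n] by (cases "mat_inverse V", auto)
  have "minv V = B" unfolding minv_def B by simp
  thus "minv V \<in> carrier_mat n n" "V * minv V = 1\<^sub>m n" "minv V * V = 1\<^sub>m n"
    using mat_inverse(2)[OF V B] by auto
qed

lemma qtil_explicit:
  assumes k: "k < M" and q: "q \<in> carrier_vec (M - 1)"
  shows "qtil M k q = vec M (\<lambda>i. if i = k then 1 else - cnj (q $ ridx k i))"
  unfolding qtil_def Ebar_mult_vec[OF k cconj_vec_carrier[THEN iffD2, OF q]]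
  by (rule eq_vecI, insert k q ridx_facts(1)[OF k], auto)

lemma qtil_carrier: "k < M \<Longrightarrow> q \<in> carrier_vec (M - 1) \<Longrightarrow> qtil M k q \<in> carrier_vec M"
  by (simp add: qtil_explicit)

lemma det_Tk_qtil:
  assumes k: "k < M" and u: "u \<in> carrier_vec M" and q: "q \<in> carrier_vec (M - 1)"
  shows "det (Tk M k u q) = cnj (cconj_vec (qtil M k q) \<bullet> u)"
proof -
  have fin: "finite {0..<M}" by simp
  have "cconj_vec (qtil M k q) \<bullet> u = (\<Sum>i\<in>{0..<M}. (if i = k then 1 else - q $ ridx k i) * u $ i)"
    unfolding qtil_explicit[OF k q] scalar_prod_def using u
    by (auto intro!: sum.cong)
  also have "\<dots> = u $ k + (\<Sum>i\<in>{0..<M}-{k}. (if i = k then 1 else - q $ ridx k i) * u $ i)"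
    using k by (subst sum.remove[OF fin, of k], auto)
  also have "(\<Sum>i\<in>{0..<M}-{k}. (if i = k then 1 else - q $ ridx k i) * u $ i) = - (\<Sum>i\<in>{0..<M}-{k}. u $ i * q $ ridx k i)"
    by (subst sum_negf[symmetric], rule sum.cong, auto)
  finally show ?thesis unfolding det_Tk[OF k u q] by (simp add: cnj_sum)
qed


lemma mult_cnj_cmod: "z * cnj z = complex_of_real (cmod z ^ 2)"
  by (simp add: complex_mult_cnj cmod_power2)

lemma qform_nonneg:
  assumes "hermitian_pd n V" "x \<in> carrier_vec n"
  shows "Re (qform x V) \<ge> 0"
proof (cases "x = 0\<^sub>v n")
  case True
  have V: "V \<in> carrier_mat n n" using assms unfolding hermitian_pd_def by auto
  have "cconj_vec (0\<^sub>v n) = 0\<^sub>v n" by (rule eq_vecI, auto)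
  thus ?thesis using True V by (simp add: qform_def)
next
  case False
  thus ?thesis using assms unfolding hermitian_pd_def by force
qed

lemma cs_expand:
  assumes hV: "hermitian_pd n V" and Q: "Q \<in> carrier_vec n" and u: "u \<in> carrier_vec n"
    and y: "y \<in> carrier_vec n" and Vy: "V *\<^sub>v y = Q" and s: "s = qform y V" and s0: "s \<noteq> 0"
    and c: "c = cconj_vec Q \<bullet> u"
  shows "qform (u - (c / s) \<cdot>\<^sub>v y) V = qform u V - c * cnj c / s"
proof -
  have V: "V \<in> carrier_mat n n" and h: "hadj V = V" using hV unfolding hermitian_pd_def by auto
  define a where "a = c / s"
  have sr: "cnj s = s" unfolding s using herm_real[OF V h y] .
  have ca: "cnj a = cnj c / s" unfolding a_def using sr by simp
  have cy: "cconj_vec y \<in> carrier_vec n" "cconj_vec u \<in> carrier_vec n" using y u by auto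
  have Vu: "V *\<^sub>v u \<in> carrier_vec n" using V u by simp
  have e1: "cconj_vec (u - a \<cdot>\<^sub>v y) = cconj_vec u - cnj a \<cdot>\<^sub>v cconj_vec y"
    using cconj_minus[OF u, of "a \<cdot>\<^sub>v y"] y by (simp add: cconj_smult)
  have e2: "V *\<^sub>v (u - a \<cdot>\<^sub>v y) = V *\<^sub>v u - a \<cdot>\<^sub>v Q"
    using V u y Vy by (simp add: mult_minus_distrib_mat_vec mult_mat_vec)
  have "qform (u - a \<cdot>\<^sub>v y) V = (cconj_vec u - cnj a \<cdot>\<^sub>v cconj_vec y) \<bullet> (V *\<^sub>v u - a \<cdot>\<^sub>v Q)"
    unfolding qform_def e1 e2 ..
  also have "\<dots> = cconj_vec u \<bullet> (V *\<^sub>v u) - a * (cconj_vec u \<bullet> Q)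
      - cnj a * (cconj_vec y \<bullet> (V *\<^sub>v u)) + cnj a * a * (cconj_vec y \<bullet> Q)"
    using cy Vu Q by (simp add: minus_scalar_prod_distrib scalar_prod_minus_distrib algebra_simps)
  also have "cconj_vec u \<bullet> Q = cnj c"
    unfolding c using scalar_cnj[of "cconj_vec Q" n u] Q u comm_scalar_prod[OF Q cy(2)] by simp
  also have "cconj_vec y \<bullet> (V *\<^sub>v u) = c"
    unfolding c herm_adj[OF V h y u] Vy ..
  also have "cconj_vec y \<bullet> Q = s" unfolding s qform_def Vy ..
  finally have X: "qform (u - a \<cdot>\<^sub>v y) V = qform u V - a * cnj c - cnj a * c + cnj a * a * s"
    unfolding qform_def .
  have "qform u V - a * cnj c - cnj a * c + cnj a * a * s = qform u V - c * cnj c / s"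
    unfolding ca a_def using s0 by (simp add: field_simps)
  with X show ?thesis unfolding a_def by simp
qed

lemma ln_eq_minus_one: assumes a: "(a::real) > 0" and e: "ln a = a - 1" shows "a = 1"
proof -
  have sa: "sqrt a > 0" using a by simp
  have "ln a = 2 * ln (sqrt a)" using a by (simp add: ln_sqrt)
  also have "\<dots> \<le> 2 * (sqrt a - 1)" using ln_le_minus_one[OF sa] by simp
  finally have "a - 1 \<le> 2 * sqrt a - 2" using e by simp
  hence "(sqrt a - 1)^2 \<le> 0" using a by (simp add: power2_eq_square algebra_simps)
  hence "sqrt a = 1" by simp
  thus ?thesis using a by (metis real_sqrt_eq_1_iff)
qed

lemma core:
  assumes hV: "hermitian_pd n V" and Q: "Q \<in> carrier_vec n" and Q0: "Q \<noteq> 0\<^sub>v n"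
  defines "y \<equiv> minv V *\<^sub>v Q"
  defines "S \<equiv> Re (qform Q (minv V))"
  shows "S > 0"
    and "\<And>u. u \<in> carrier_vec n \<Longrightarrow> cconj_vec Q \<bullet> u \<noteq> 0 \<Longrightarrow>
           Re (qform u V) - 2 * ln (cmod (cconj_vec Q \<bullet> u)) \<ge> 1 - ln S"
    and "\<And>u. u \<in> carrier_vec n \<Longrightarrow> cconj_vec Q \<bullet> u \<noteq> 0 \<Longrightarrow>
           Re (qform u V) - 2 * ln (cmod (cconj_vec Q \<bullet> u)) = 1 - ln S \<Longrightarrow>
           \<exists>\<theta> \<in> {0..2*pi}. u = (exp (\<i> * complex_of_real \<theta>) / complex_of_real (sqrt S)) \<cdot>\<^sub>v y"
    and "\<And>\<theta>. (exp (\<i> * complex_of_real \<theta>) / complex_of_real (sqrt S)) \<cdot>\<^sub>v y \<in> carrier_vec n"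
    and "\<And>\<theta>. cconj_vec Q \<bullet> ((exp (\<i> * complex_of_real \<theta>) / complex_of_real (sqrt S)) \<cdot>\<^sub>v y) \<noteq> 0"
    and "\<And>\<theta>. Re (qform ((exp (\<i> * complex_of_real \<theta>) / complex_of_real (sqrt S)) \<cdot>\<^sub>v y) V)
           - 2 * ln (cmod (cconj_vec Q \<bullet> ((exp (\<i> * complex_of_real \<theta>) / complex_of_real (sqrt S)) \<cdot>\<^sub>v y))) = 1 - ln S"
proof -
  have V: "V \<in> carrier_mat n n" and h: "hadj V = V"
    and pos: "\<And>x. x \<in> carrier_vec n \<Longrightarrow> x \<noteq> 0\<^sub>v n \<Longrightarrow> Re (qform x V) > 0"
    using hV unfolding hermitian_pd_def by auto
  note W = pd_inv[OF hV]
  have y: "y \<in> carrier_vec n" unfolding y_def using W(1) Q by simp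
  have Vy: "V *\<^sub>v y = Q" unfolding y_def using W Q V
    by (simp add: assoc_mult_mat_vec[symmetric, of V n n "minv V" n Q])
  have y0: "y \<noteq> 0\<^sub>v n"
  proof
    assume "y = 0\<^sub>v n"
    moreover have "V *\<^sub>v 0\<^sub>v n = 0\<^sub>v n" by (rule eq_vecI, insert V, auto)
    ultimately have "Q = 0\<^sub>v n" using Vy by simp
    thus False using Q0 by simp
  qed
  define s where "s = qform y V"
  have sQ: "qform Q (minv V) = s"
    unfolding qform_def s_def y_def[symmetric] using herm_adj[OF V h y y] Vy by simp
  have Spos: "S > 0" unfolding S_def sQ s_def using pos[OF y y0] .
  have sS: "s = complex_of_real S" unfolding S_def sQ s_def using herm_real'[OF V h y] .
  have s0: "s \<noteq> 0" using sS Spos by simp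
  show "S > 0" by fact
  have key: "Re (qform u V) - cmod (cconj_vec Q \<bullet> u) ^ 2 / S
       = Re (qform (u - ((cconj_vec Q \<bullet> u) / s) \<cdot>\<^sub>v y) V)" if u: "u \<in> carrier_vec n" for u
  proof -
    have "qform (u - ((cconj_vec Q \<bullet> u) / s) \<cdot>\<^sub>v y) V = qform u V - (cconj_vec Q \<bullet> u) * cnj (cconj_vec Q \<bullet> u) / s"
      by (rule cs_expand[OF hV Q u y Vy s_def s0 refl])
    thus ?thesis unfolding mult_cnj_cmod sS by simp
  qed
  have lower: "Re (qform u V) \<ge> cmod (cconj_vec Q \<bullet> u) ^ 2 / S" if u: "u \<in> carrier_vec n" for u
  proof -
    have "Re (qform (u - ((cconj_vec Q \<bullet> u) / s) \<cdot>\<^sub>v y) V) \<ge> 0"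
      by (rule qform_nonneg[OF hV], insert u y, auto)
    thus ?thesis using key[OF u] by simp
  qed
  have bound: "Re (qform u V) - 2 * ln (cmod (cconj_vec Q \<bullet> u)) \<ge> 1 - ln S
      \<and> (Re (qform u V) - 2 * ln (cmod (cconj_vec Q \<bullet> u)) = 1 - ln S \<longrightarrow>
          Re (qform u V) = 1 \<and> cmod (cconj_vec Q \<bullet> u) ^ 2 = S)"
    if u: "u \<in> carrier_vec n" and c0: "cconj_vec Q \<bullet> u \<noteq> 0" for u :: "complex vec"
  proof -
    define a where "a = Re (qform u V)"
    define m where "m = cmod (cconj_vec Q \<bullet> u)"
    have m: "m > 0" using c0 unfolding m_def by simp
    have am: "a \<ge> m^2 / S" using lower[OF u] unfolding a_def m_def .
    have "m^2 / S > 0" using m Spos by simp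
    hence a: "a > 0" using am by linarith
    have lm: "2 * ln m = ln (m^2)" using m by (simp add: ln_realpow)
    have mle: "m^2 \<le> a * S" using am Spos by (simp add: field_simps)
    have "ln (m^2) \<le> ln (a * S)" using mle m a Spos by (subst ln_le_cancel_iff, auto)
    hence l1: "ln (m^2) \<le> ln a + ln S" using a Spos by (simp add: ln_mult)
    have l2: "ln a \<le> a - 1" using ln_le_minus_one[OF a] .
    have ge: "a - 2 * ln m \<ge> 1 - ln S" using l1 l2 lm by simp
    moreover have "a - 2 * ln m = 1 - ln S \<longrightarrow> a = 1 \<and> m^2 = S"
    proof
      assume eq: "a - 2 * ln m = 1 - ln S"
      have "ln a = a - 1" using eq l1 l2 lm by simp
      hence a1: "a = 1" using ln_eq_minus_one a by blast
      hence "ln (m^2) = ln S" using eq lm by simp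
      hence "m^2 = S" using m Spos by simp
      thus "a = 1 \<and> m^2 = S" using a1 by simp
    qed
    ultimately show ?thesis unfolding a_def m_def by simp
  qed
  show "\<And>u. u \<in> carrier_vec n \<Longrightarrow> cconj_vec Q \<bullet> u \<noteq> 0 \<Longrightarrow>
           Re (qform u V) - 2 * ln (cmod (cconj_vec Q \<bullet> u)) \<ge> 1 - ln S"
    using bound by blast
  show "\<exists>\<theta> \<in> {0..2*pi}. u = (exp (\<i> * complex_of_real \<theta>) / complex_of_real (sqrt S)) \<cdot>\<^sub>v y"
    if u: "u \<in> carrier_vec n" and c0: "cconj_vec Q \<bullet> u \<noteq> 0"
      and eq: "Re (qform u V) - 2 * ln (cmod (cconj_vec Q \<bullet> u)) = 1 - ln S" for u :: "complex vec"
  proof -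
    define c where "c = cconj_vec Q \<bullet> u"
    have a1: "Re (qform u V) = 1" and m2: "cmod c ^ 2 = S" using bound[OF u c0] eq unfolding c_def by auto
    have "Re (qform (u - (c / s) \<cdot>\<^sub>v y) V) = 0" using key[OF u] a1 m2 Spos unfolding c_def by simp
    moreover have uc: "u - (c / s) \<cdot>\<^sub>v y \<in> carrier_vec n" using u y by simp
    ultimately have h0: "u - (c / s) \<cdot>\<^sub>v y = 0\<^sub>v n" using pos[OF uc] by fastforce
    have ueq: "u = (c / s) \<cdot>\<^sub>v y"
    proof (rule eq_vecI)
      fix i assume "i < dim_vec ((c / s) \<cdot>\<^sub>v y)"
      hence i: "i < n" using y by simp
      have "(u - (c / s) \<cdot>\<^sub>v y) $ i = 0" using h0 i by simp
      thus "u $ i = ((c / s) \<cdot>\<^sub>v y) $ i" using i u y by simp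
    qed (insert u y, simp)
    have cm: "cmod c = sqrt S" using m2 by (metis norm_ge_zero real_sqrt_unique)
    have c0': "c \<noteq> 0" using c0 unfolding c_def .
    have "c = complex_of_real (cmod c) * cis (Arg c)"
      using cis_Arg[OF c0'] c0' by (simp add: complex_sgn_def scaleR_conv_of_real field_simps)
    hence ce: "c = complex_of_real (sqrt S) * cis (Arg c)" unfolding cm .
    have SS: "complex_of_real S = complex_of_real (sqrt S) * complex_of_real (sqrt S)"
      using Spos by (simp flip: of_real_mult)
    have sq0: "complex_of_real (sqrt S) \<noteq> 0" using Spos by simp
    have "c / s = cis (Arg c) / complex_of_real (sqrt S)"
      unfolding sS SS using sq0 by (subst ce, simp)
    define th where "th = (if Arg c \<ge> 0 then Arg c else Arg c + 2 * pi)"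
    have th: "th \<in> {0..2*pi}" unfolding th_def using Arg_bounded[of c] by auto
    have "cis th = cis (Arg c)" unfolding th_def by (simp add: complex_eq_iff)
    hence "c / s = exp (\<i> * complex_of_real th) / complex_of_real (sqrt S)"
      using \<open>c / s = _\<close> by (simp add: cis_conv_exp)
    thus ?thesis using ueq th by (intro bexI[of _ th], simp_all)
  qed
  fix \<theta> :: real
  define b where "b = exp (\<i> * complex_of_real \<theta>) / complex_of_real (sqrt S)"
  have bm: "cmod b = 1 / sqrt S" unfolding b_def using Spos by (simp add: norm_divide)
  show "b \<cdot>\<^sub>v y \<in> carrier_vec n" using y by simp
  have cb: "cconj_vec Q \<bullet> (b \<cdot>\<^sub>v y) = b * s"
    using Q y sQ unfolding qform_def y_def by simp
  show "cconj_vec Q \<bullet> (b \<cdot>\<^sub>v y) \<noteq> 0" unfolding cb using s0 Spos by (simp add: b_def)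
  have qb: "qform (b \<cdot>\<^sub>v y) V = cnj b * b * s"
    unfolding qform_def cconj_smult s_def using y V by (simp add: mult_mat_vec)
  have "Re (qform (b \<cdot>\<^sub>v y) V) = 1"
    unfolding qb mult.commute[of "cnj b"] mult_cnj_cmod bm sS using Spos
    by (simp add: power_divide)
  moreover have "cmod (cconj_vec Q \<bullet> (b \<cdot>\<^sub>v y)) = sqrt S"
  proof -
    have "cmod (cconj_vec Q \<bullet> (b \<cdot>\<^sub>v y)) = S / sqrt S"
      unfolding cb sS norm_mult bm using Spos by simp
    also have "\<dots> = sqrt S" using Spos by (simp add: real_div_sqrt)
    finally show ?thesis .
  qed
  moreover have "2 * ln (sqrt S) = ln S" using Spos by (simp add: ln_sqrt)
  ultimately show "Re (qform (b \<cdot>\<^sub>v y) V) - 2 * ln (cmod (cconj_vec Q \<bullet> (b \<cdot>\<^sub>v y))) = 1 - ln S"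
    by simp
qed


lemma minv_facts:
  assumes A: "A \<in> carrier_mat n n" and d: "det A \<noteq> 0"
  shows "minv A \<in> carrier_mat n n" "A * minv A = 1\<^sub>m n" "minv A * A = 1\<^sub>m n"
proof -
  have "A \<in> Units (ring_mat TYPE(complex) n n)" by (rule det_non_zero_imp_unit[OF A d])
  then obtain B where B: "mat_inverse A = Some B" using mat_inverse(1)[OF A, of n] by (cases "mat_inverse A", auto)
  have "minv A = B" unfolding minv_def B by simp
  thus "minv A \<in> carrier_mat n n" "A * minv A = 1\<^sub>m n" "minv A * A = 1\<^sub>m n"
    using mat_inverse(2)[OF A B] by auto
qed

lemma minv_unique:
  assumes A: "A \<in> carrier_mat n n" and B: "B \<in> carrier_mat n n" and AB: "A * B = 1\<^sub>m n"
  shows "minv A = B"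
proof -
  have "det A * det B = 1" using det_mult[OF A B] AB by simp
  hence d: "det A \<noteq> 0" by auto
  note F = minv_facts[OF A d]
  have "minv A = minv A * (A * B)" using F(1) AB by simp
  also have "\<dots> = (minv A * A) * B" using F(1) A B by (simp add: assoc_mult_mat)
  also have "\<dots> = B" using F(3) B by simp
  finally show ?thesis .
qed

lemma cconj_mat_mult: "A \<in> carrier_mat n m \<Longrightarrow> B \<in> carrier_mat m p \<Longrightarrow>
   cconj_mat (A * B) = cconj_mat A * cconj_mat B"
  by (rule eq_matI, auto simp: cconj_mat_def scalar_prod_def cnj_sum row_def col_def intro!: sum.cong)

lemma hadj_mult: "A \<in> carrier_mat n m \<Longrightarrow> B \<in> carrier_mat m p \<Longrightarrow>
   hadj (A * B) = hadj B * hadj A"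
  unfolding hadj_def cconj_mat_mult
  by (rule transpose_mult, auto simp: cconj_mat_def)

lemma hadj_one: "hadj (1\<^sub>m n) = 1\<^sub>m n"
  by (rule eq_matI, auto simp: hadj_def cconj_mat_def)

lemma hadj_carrier: "A \<in> carrier_mat n m \<Longrightarrow> hadj A \<in> carrier_mat m n"
  by (auto simp: hadj_def cconj_mat_def)

lemma inv_herm:
  assumes hV: "hermitian_pd n V"
  shows "hadj (minv V) = minv V"
proof -
  have V: "V \<in> carrier_mat n n" and h: "hadj V = V" using hV unfolding hermitian_pd_def by auto
  note W = pd_inv[OF hV]
  have HW: "hadj (minv V) \<in> carrier_mat n n" using hadj_carrier[OF W(1)] .
  have "hadj (minv V) * V = 1\<^sub>m n"
    using hadj_mult[OF V W(1)] W(2) h hadj_one by simp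
  have "hadj (minv V) = hadj (minv V) * (V * minv V)" using W(2) HW by simp
  also have "\<dots> = (hadj (minv V) * V) * minv V" using HW V W(1) by (simp add: assoc_mult_mat)
  also have "\<dots> = minv V" using \<open>hadj (minv V) * V = 1\<^sub>m n\<close> W(1) by simp
  finally show ?thesis .
qed

lemma inv_pd:
  assumes hV: "hermitian_pd n V" and z: "z \<in> carrier_vec n" and z0: "z \<noteq> 0\<^sub>v n"
  shows "Re (qform z (minv V)) > 0"
proof -
  have V: "V \<in> carrier_mat n n" and h: "hadj V = V"
    and pos: "\<And>x. x \<in> carrier_vec n \<Longrightarrow> x \<noteq> 0\<^sub>v n \<Longrightarrow> Re (qform x V) > 0"
    using hV unfolding hermitian_pd_def by auto
  note W = pd_inv[OF hV]
  define y where "y = minv V *\<^sub>v z"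
  have y: "y \<in> carrier_vec n" unfolding y_def using W(1) z by simp
  have Vy: "V *\<^sub>v y = z" unfolding y_def using W z V
    by (simp add: assoc_mult_mat_vec[symmetric, of V n n "minv V" n z])
  have y0: "y \<noteq> 0\<^sub>v n"
  proof
    assume "y = 0\<^sub>v n"
    moreover have "V *\<^sub>v 0\<^sub>v n = 0\<^sub>v n" by (rule eq_vecI, insert V, auto)
    ultimately have "z = 0\<^sub>v n" using Vy by simp
    thus False using z0 by simp
  qed
  have "qform z (minv V) = qform y V"
    unfolding qform_def y_def[symmetric] using herm_adj[OF V h y y] Vy by simp
  thus ?thesis using pos[OF y y0] by simp
qed

lemma cconj_Ebar: "cconj_mat (Ebar M k) = Ebar M k"
  by (rule eq_matI, auto simp: cconj_mat_def Ebar_def)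

lemma cconj_unit: "cconj_vec (unit_vec n i) = unit_vec n i"
  by (rule eq_vecI, auto simp: unit_vec_def)

lemma cconj_mat_carrier: "A \<in> carrier_mat n m \<Longrightarrow> cconj_mat A \<in> carrier_mat n m"
  by (auto simp: cconj_mat_def)

lemma qform_cconj_mat:
  assumes A: "A \<in> carrier_mat n n" and v: "v \<in> carrier_vec n"
  shows "qform v (cconj_mat A) = cnj (qform (cconj_vec v) A)"
proof -
  have cv: "cconj_vec v \<in> carrier_vec n" using v by simp
  have "cconj_mat A *\<^sub>v v = cconj_vec (A *\<^sub>v cconj_vec v)"
    using cconj_mult_mat_vec[OF A cv] by simp
  moreover have "cnj (v \<bullet> (A *\<^sub>v cconj_vec v)) = cconj_vec v \<bullet> cconj_vec (A *\<^sub>v cconj_vec v)"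
    using scalar_cnj[OF v, of "A *\<^sub>v cconj_vec v"] A cv by simp
  ultimately show ?thesis unfolding qform_def by simp
qed

lemma Ebar_trick:
  assumes k: "k < M" and x: "x \<in> carrier_vec (M - 1)" and v: "v \<in> carrier_vec M"
  shows "cconj_vec x \<bullet> (transpose_mat (Ebar M k) *\<^sub>v v) = cconj_vec (Ebar M k *\<^sub>v x) \<bullet> v"
proof -
  note E = Ebar_carrier[of M k]
  have cx: "cconj_vec x \<in> carrier_vec (M - 1)" using x by simp
  have "cconj_vec (Ebar M k *\<^sub>v x) = Ebar M k *\<^sub>v cconj_vec x"
    using cconj_mult_mat_vec[OF E x] cconj_Ebar by simp
  moreover have "(transpose_mat (Ebar M k) *\<^sub>v v) \<bullet> cconj_vec x = v \<bullet> (Ebar M k *\<^sub>v cconj_vec x)"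
    by (rule transpose_vec_mult_scalar[OF E cx v])
  moreover have "cconj_vec x \<bullet> (transpose_mat (Ebar M k) *\<^sub>v v) = (transpose_mat (Ebar M k) *\<^sub>v v) \<bullet> cconj_vec x"
    by (rule comm_scalar_prod[OF cx], insert E v, simp)
  moreover have "v \<bullet> (Ebar M k *\<^sub>v cconj_vec x) = (Ebar M k *\<^sub>v cconj_vec x) \<bullet> v"
    by (rule comm_scalar_prod[OF v], insert E cx, simp)
  ultimately show ?thesis by simp
qed

lemma Ebar_inj:
  assumes k: "k < M" and x: "x \<in> carrier_vec (M - 1)" and x0: "x \<noteq> 0\<^sub>v (M - 1)"
  shows "Ebar M k *\<^sub>v x \<noteq> 0\<^sub>v M"
proof
  assume h: "Ebar M k *\<^sub>v x = 0\<^sub>v M"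
  have "x = 0\<^sub>v (M - 1)"
  proof (rule eq_vecI)
    fix j assume "j < dim_vec (0\<^sub>v (M - 1) :: complex vec)"
    hence j: "j < M - 1" by simp
    have "(Ebar M k *\<^sub>v x) $ idx k j = x $ j"
      unfolding Ebar_mult_vec[OF k x] using idx_facts[OF k j] by simp
    thus "x $ j = 0\<^sub>v (M - 1) $ j" using h idx_facts[OF k j] j by simp
  qed (insert x, simp)
  thus False using x0 by simp
qed

lemma Cside:
  assumes k: "k < M" and hV: "hermitian_pd M (Vf k)" and q: "q \<in> carrier_vec (M - 1)"
  shows "Re (qform (q - minv (Cmat M k Vf) *\<^sub>v gvec M k Vf) (Cmat M k Vf) + zval M k Vf)
       = Re (qform (qtil M k q) (minv (Vf k)))"
proof -
  define E where "E = Ebar M k"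
  define W where "W = minv (Vf k)"
  define P where "P = cconj_mat W"
  define C where "C = Cmat M k Vf"
  define g where "g = gvec M k Vf"
  define ek where "ek = (unit_vec M k :: complex vec)"
  have E: "E \<in> carrier_mat M (M - 1)" unfolding E_def by (rule Ebar_carrier)
  have W: "W \<in> carrier_mat M M" unfolding W_def using pd_inv[OF hV] by simp
  have P: "P \<in> carrier_mat M M" unfolding P_def using cconj_mat_carrier[OF W] .
  have hW: "hadj W = W" unfolding W_def by (rule inv_herm[OF hV])
  have hP: "hadj P = P"
  proof -
    have "cconj_mat W = transpose_mat W" by (rule herm_cconj[OF W hW])
    have "cconj_mat (cconj_mat W) = W" by (rule eq_matI, auto simp: cconj_mat_def)
    hence "hadj P = transpose_mat W" unfolding P_def hadj_def by simp
    thus ?thesis unfolding P_def using \<open>cconj_mat W = transpose_mat W\<close> by simp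
  qed
  have ek: "ek \<in> carrier_vec M" unfolding ek_def by simp
  have Cdef: "C = transpose_mat E * P * E" unfolding C_def Cmat_def E_def P_def W_def ..
  have C: "C \<in> carrier_mat (M - 1) (M - 1)" unfolding Cdef using E P by auto
  have Cv: "C *\<^sub>v x = transpose_mat E *\<^sub>v (P *\<^sub>v (E *\<^sub>v x))" if x: "x \<in> carrier_vec (M - 1)" for x
  proof -
    have 1: "(transpose_mat E * P * E) *\<^sub>v x = (transpose_mat E * P) *\<^sub>v (E *\<^sub>v x)"
      by (rule assoc_mult_mat_vec, insert E P x, auto)
    have 2: "(transpose_mat E * P) *\<^sub>v (E *\<^sub>v x) = transpose_mat E *\<^sub>v (P *\<^sub>v (E *\<^sub>v x))"
      by (rule assoc_mult_mat_vec, insert E P x, auto)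
    show ?thesis unfolding Cdef 1 2 ..
  qed
  have gdef: "g = transpose_mat E *\<^sub>v (P *\<^sub>v ek)" unfolding g_def gvec_def E_def P_def W_def ek_def ..
  have g: "g \<in> carrier_vec (M - 1)" unfolding gdef using E P ek by simp
  have qC: "qform x C = qform (E *\<^sub>v x) P" if x: "x \<in> carrier_vec (M - 1)" for x
    unfolding qform_def Cv[OF x] using Ebar_trick[OF k x, of "P *\<^sub>v (E *\<^sub>v x)"] E P x
    unfolding E_def by simp
  have detC: "det C \<noteq> 0"
  proof
    assume "det C = 0"
    then obtain x where x: "x \<in> carrier_vec (M - 1)" "x \<noteq> 0\<^sub>v (M - 1)" "C *\<^sub>v x = 0\<^sub>v (M - 1)"
      using det_0_iff_vec_prod_zero[OF C] by auto
    have "qform x C = 0" unfolding qform_def x(3) using x(1) by simp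
    hence "qform (E *\<^sub>v x) P = 0" using qC[OF x(1)] by simp
    hence "qform (cconj_vec (E *\<^sub>v x)) W = 0"
      using qform_cconj_mat[OF W, of "E *\<^sub>v x"] E x(1) unfolding P_def by simp
    moreover have "cconj_vec (E *\<^sub>v x) \<noteq> 0\<^sub>v M"
    proof
      assume "cconj_vec (E *\<^sub>v x) = 0\<^sub>v M"
      moreover have "cconj_vec (0\<^sub>v M) = 0\<^sub>v M" by (rule eq_vecI, auto)
      ultimately have "cconj_vec (cconj_vec (E *\<^sub>v x)) = 0\<^sub>v M" by simp
      thus False using Ebar_inj[OF k x(1,2)] unfolding E_def by simp
    qed
    ultimately show False using inv_pd[OF hV, of "cconj_vec (E *\<^sub>v x)"] E x(1) unfolding W_def by simp
  qed
  note CF = minv_facts[OF C detC]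
  define h where "h = minv C *\<^sub>v g"
  have h: "h \<in> carrier_vec (M - 1)" unfolding h_def using CF(1) g by simp
  have Ch: "C *\<^sub>v h = g" unfolding h_def using CF C g
    by (simp add: assoc_mult_mat_vec[symmetric, of C _ _ "minv C" _ g])
  define y where "y = E *\<^sub>v q"
  have y: "y \<in> carrier_vec M" unfolding y_def using E q by simp
  define t where "t = cconj_vec y \<bullet> (P *\<^sub>v ek)"
  define w where "w = cconj_vec g \<bullet> h"
  have Pek: "P *\<^sub>v ek \<in> carrier_vec M" using P ek by simp
  have Py: "P *\<^sub>v y \<in> carrier_vec M" using P y by simp
  have Eh: "E *\<^sub>v h \<in> carrier_vec M" using E h by simp
  have Cq: "C *\<^sub>v q \<in> carrier_vec (M - 1)" using C q by simp
  have t1: "cconj_vec q \<bullet> (C *\<^sub>v q) = qform y P" using qC[OF q] unfolding qform_def y_def .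
  have t2: "cconj_vec q \<bullet> g = t" unfolding gdef t_def y_def E_def using Ebar_trick[OF k q Pek] by simp
  have t3: "cconj_vec h \<bullet> (C *\<^sub>v q) = cnj t"
  proof -
    have "cconj_vec h \<bullet> (C *\<^sub>v q) = cconj_vec (E *\<^sub>v h) \<bullet> (P *\<^sub>v y)"
      unfolding Cv[OF q] y_def[symmetric] using Ebar_trick[OF k h Py] unfolding E_def by simp
    also have "\<dots> = cconj_vec (P *\<^sub>v (E *\<^sub>v h)) \<bullet> y" using herm_adj[OF P hP Eh y] .
    also have "\<dots> = cnj (cconj_vec y \<bullet> (P *\<^sub>v (E *\<^sub>v h)))"
      using scalar_cnj[of "cconj_vec y" M "P *\<^sub>v (E *\<^sub>v h)"] y P Eh
        comm_scalar_prod[of y M "cconj_vec (P *\<^sub>v (E *\<^sub>v h))"] by simp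
    also have "cconj_vec y \<bullet> (P *\<^sub>v (E *\<^sub>v h)) = cconj_vec q \<bullet> (C *\<^sub>v h)"
      unfolding Cv[OF h] y_def using Ebar_trick[OF k q, of "P *\<^sub>v (E *\<^sub>v h)"] P Eh unfolding E_def by simp
    also have "\<dots> = t" using t2 Ch by simp
    finally show ?thesis .
  qed
  have t4: "cconj_vec h \<bullet> g = cnj w"
    unfolding w_def using scalar_cnj[of "cconj_vec g" "M - 1" h] g h comm_scalar_prod[of g "M - 1" "cconj_vec h"] by simp
  have "qform (q - h) C = cconj_vec (q - h) \<bullet> (C *\<^sub>v q - g)"
    unfolding qform_def using C q h Ch by (simp add: mult_minus_distrib_mat_vec)
  also have "\<dots> = cconj_vec q \<bullet> (C *\<^sub>v q) - cconj_vec q \<bullet> g - cconj_vec h \<bullet> (C *\<^sub>v q) + cconj_vec h \<bullet> g"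
    using q h g Cq by (simp add: cconj_minus[OF q h] minus_scalar_prod_distrib scalar_prod_minus_distrib)
  finally have L: "qform (q - h) C = qform y P - t - cnj t + cnj w" unfolding t1 t2 t3 t4 .
  have zdef: "zval M k Vf = P $$ (k, k) - w"
    unfolding zval_def w_def qform_def h_def C_def g_def P_def W_def ..
  define Q where "Q = qtil M k q"
  have Q: "Q \<in> carrier_vec M" unfolding Q_def by (rule qtil_carrier[OF k q])
  have cQ: "cconj_vec Q = ek - y"
  proof -
    have "cconj_vec (E *\<^sub>v cconj_vec q) = y"
      unfolding y_def using cconj_mult_mat_vec[OF E, of "cconj_vec q"] q cconj_Ebar unfolding E_def by simp
    thus ?thesis unfolding Q_def qtil_def ek_def E_def
      using cconj_minus[of "unit_vec M k" M "Ebar M k *\<^sub>v cconj_vec q"] q E cconj_unit unfolding E_def by simp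
  qed
  have "Re (qform Q W) = Re (qform (cconj_vec Q) P)"
    unfolding P_def using qform_cconj_mat[OF W, of "cconj_vec Q"] Q by simp
  also have "qform (cconj_vec Q) P = cconj_vec (ek - y) \<bullet> (P *\<^sub>v ek - P *\<^sub>v y)"
    unfolding qform_def cQ using P ek y by (simp add: mult_minus_distrib_mat_vec)
  also have "\<dots> = cconj_vec ek \<bullet> (P *\<^sub>v ek) - cconj_vec ek \<bullet> (P *\<^sub>v y) - cconj_vec y \<bullet> (P *\<^sub>v ek) + cconj_vec y \<bullet> (P *\<^sub>v y)"
    using ek y Pek Py by (simp add: cconj_minus[OF ek y] minus_scalar_prod_distrib scalar_prod_minus_distrib)
  also have "cconj_vec ek \<bullet> (P *\<^sub>v ek) = P $$ (k, k)"
    unfolding ek_def cconj_unit using P k by simp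
  also have "cconj_vec ek \<bullet> (P *\<^sub>v y) = cnj t"
  proof -
    have "cconj_vec ek \<bullet> (P *\<^sub>v y) = cconj_vec (P *\<^sub>v ek) \<bullet> y" by (rule herm_adj[OF P hP ek y])
    also have "\<dots> = cnj t" unfolding t_def
      using scalar_cnj[of "cconj_vec y" M "P *\<^sub>v ek"] y Pek comm_scalar_prod[of y M "cconj_vec (P *\<^sub>v ek)"] by simp
    finally show ?thesis .
  qed
  finally have R: "Re (qform Q W) = Re (P $$ (k, k) - cnj t - t + qform y P)"
    unfolding t_def[symmetric] qform_def by simp
  have hh: "minv (Cmat M k Vf) *\<^sub>v gvec M k Vf = h" unfolding h_def C_def g_def ..
  show ?thesis
    unfolding hh unfolding C_def[symmetric] Q_def[symmetric] W_def[symmetric]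
    unfolding L zdef R by simp
qed


lemma herm_entry: "V \<in> carrier_mat n n \<Longrightarrow> hadj V = V \<Longrightarrow> i < n \<Longrightarrow> j < n \<Longrightarrow> V $$ (i,j) = cnj (V $$ (j,i))"
  by (metis hadj_def cconj_mat_def index_map_mat(1) index_transpose_mat(1) carrier_matD
      index_map_mat(2) index_map_mat(3))

lemma qform_unit: "V \<in> carrier_mat n n \<Longrightarrow> i < n \<Longrightarrow> j < n \<Longrightarrow>
   cconj_vec (unit_vec n i) \<bullet> (V *\<^sub>v unit_vec n j) = V $$ (i,j)"
  unfolding cconj_unit by simp

lemma qform_two:
  assumes V: "V \<in> carrier_mat n n" and m: "m < n" and k: "k < n"
  shows "qform (unit_vec n m + t \<cdot>\<^sub>v unit_vec n k) V
    = V $$ (m,m) + t * V $$ (m,k) + cnj t * V $$ (k,m) + cnj t * t * V $$ (k,k)"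
proof -
  define em where "em = (unit_vec n m :: complex vec)"
  define ek where "ek = (unit_vec n k :: complex vec)"
  have c: "em \<in> carrier_vec n" "ek \<in> carrier_vec n" "cconj_vec em \<in> carrier_vec n" "cconj_vec ek \<in> carrier_vec n"
    "V *\<^sub>v em \<in> carrier_vec n" "V *\<^sub>v ek \<in> carrier_vec n" using V unfolding em_def ek_def by auto
  have "qform (em + t \<cdot>\<^sub>v ek) V = (cconj_vec em + cnj t \<cdot>\<^sub>v cconj_vec ek) \<bullet> (V *\<^sub>v em + t \<cdot>\<^sub>v (V *\<^sub>v ek))"
    unfolding qform_def using c V by (simp add: cconj_add cconj_smult mult_add_distrib_mat_vec mult_mat_vec)
  also have "\<dots> = cconj_vec em \<bullet> (V *\<^sub>v em) + t * (cconj_vec em \<bullet> (V *\<^sub>v ek))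
      + cnj t * (cconj_vec ek \<bullet> (V *\<^sub>v em)) + cnj t * t * (cconj_vec ek \<bullet> (V *\<^sub>v ek))"
    using c by (simp add: add_scalar_prod_distrib[of _ n] scalar_prod_add_distrib[of _ n] algebra_simps)
  finally show ?thesis unfolding em_def ek_def using qform_unit[OF V] m k by simp
qed

lemma idx_image: assumes k: "k < M" shows "idx k ` {0..<M - 1} = {0..<M} - {k}"
proof (intro equalityI subsetI)
  fix i assume "i \<in> idx k ` {0..<M - 1}"
  then obtain j where j: "j < M - 1" "i = idx k j" by auto
  thus "i \<in> {0..<M} - {k}" using idx_facts[OF k j(1)] by auto
next
  fix i assume "i \<in> {0..<M} - {k}"
  hence i: "i < M" "i \<noteq> k" by auto
  show "i \<in> idx k ` {0..<M - 1}" using ridx_facts[OF k i]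
    by (intro image_eqI[of _ _ "ridx k i"], auto)
qed

lemma idx_inj: "inj_on (idx k) A"
  by (auto simp: inj_on_def idx_def split: if_splits)

lemma sum_idx: assumes k: "k < M" shows "(\<Sum>m\<in>{0..<M} - {k}. f m) = (\<Sum>j\<in>{0..<M - 1}. f (idx k j))"
proof -
  have "(\<Sum>m\<in>{0..<M} - {k}. f m) = sum f (idx k ` {0..<M - 1})" using idx_image[OF k] by simp
  also have "\<dots> = sum (f \<circ> idx k) {0..<M - 1}" by (rule sum.reindex[OF idx_inj])
  finally show ?thesis by simp
qed

lemma Aside:
  assumes k: "k < M" and hV: "\<And>m. m < M \<Longrightarrow> hermitian_pd M (Vf m)" and q: "q \<in> carrier_vec (M - 1)"
  shows "Re (qform (q + minv (Amat M k Vf) *\<^sub>v bvec M k Vf) (Amat M k Vf))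
    = Re (\<Sum>m \<in> {0..<M} - {k}. qform (unit_vec M m + qent k q m \<cdot>\<^sub>v unit_vec M k) (Vf m))
      + (\<Sum>j\<in>{0..<M - 1}. Re (Vf (idx k j) $$ (k, idx k j) * cnj (Vf (idx k j) $$ (k, idx k j)) / Vf (idx k j) $$ (k, k)
           - Vf (idx k j) $$ (idx k j, idx k j)))"
proof -
  define n where "n = M - 1"
  define a where "a j = Vf (idx k j) $$ (k, k)" for j
  define b where "b j = Vf (idx k j) $$ (k, idx k j)" for j
  have Vc: "\<And>j. j < n \<Longrightarrow> Vf (idx k j) \<in> carrier_mat M M" and Vh: "\<And>j. j < n \<Longrightarrow> hadj (Vf (idx k j)) = Vf (idx k j)"
    using hV idx_facts(1)[OF k] unfolding hermitian_pd_def n_def by auto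
  have a0: "a j \<noteq> 0" if j: "j < n" for j
  proof -
    have "Re (qform (unit_vec M k) (Vf (idx k j))) > 0"
      using hV[OF idx_facts(1)[OF k j[unfolded n_def]]] k unfolding hermitian_pd_def
      by (auto simp: unit_vec_def dest!: spec[of _ "unit_vec M k"] elim!: ballE)
         (metis index_unit_vec(2) index_zero_vec(1) one_neq_zero unit_vec_def)
    thus ?thesis unfolding a_def qform_def qform_unit[OF Vc[OF j] k k] by auto
  qed
  have ar: "cnj (a j) = a j" if j: "j < n" for j
    unfolding a_def using herm_entry[OF Vc[OF j] Vh[OF j] k k] by simp
  have bc: "Vf (idx k j) $$ (idx k j, k) = cnj (b j)" if j: "j < n" for j
    unfolding b_def using herm_entry[OF Vc[OF j] Vh[OF j] _ k, of "idx k j"] idx_facts(1)[OF k] j n_def by simp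
  define A where "A = Amat M k Vf"
  have Adef: "A = mat_diag n a" unfolding A_def Amat_def n_def a_def ..
  have A: "A \<in> carrier_mat n n" unfolding Adef by simp
  have Ainv: "minv A = mat_diag n (\<lambda>j. 1 / a j)"
  proof (rule minv_unique[OF A])
    show "mat_diag n (\<lambda>j. 1 / a j) \<in> carrier_mat n n" by simp
    show "A * mat_diag n (\<lambda>j. 1 / a j) = 1\<^sub>m n" unfolding Adef mat_diag_diag
      by (rule eq_matI, auto simp: mat_diag_def a0)
  qed
  have diagv: "mat_diag n f *\<^sub>v x = vec n (\<lambda>j. f j * x $ j)" if x: "x \<in> carrier_vec n" for f x
  proof (rule eq_vecI)
    fix j assume "j < dim_vec (vec n (\<lambda>j. f j * x $ j))"
    hence j: "j < n" by simp
    have "(mat_diag n f *\<^sub>v x) $ j = (\<Sum>l\<in>{0..<n}. (if j = l then f l else 0) * x $ l)"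
      using j x by (simp add: mat_diag_def scalar_prod_def)
    also have "\<dots> = (\<Sum>l\<in>{0..<n}. if l = j then f j * x $ j else 0)" by (rule sum.cong, auto)
    also have "\<dots> = f j * x $ j" using j by simp
    finally show "(mat_diag n f *\<^sub>v x) $ j = vec n (\<lambda>j. f j * x $ j) $ j" using j by simp
  qed (simp add: mat_diag_def)
  have bv: "bvec M k Vf = vec n b" unfolding bvec_def b_def n_def ..
  have w: "minv A *\<^sub>v bvec M k Vf = vec n (\<lambda>j. b j / a j)" unfolding Ainv bv
    by (subst diagv, simp, rule eq_vecI, auto)
  have qn: "q \<in> carrier_vec n" using q n_def by simp
  define z where "z = q + vec n (\<lambda>j. b j / a j)"
  have z: "z \<in> carrier_vec n" unfolding z_def using qn by simp
  have "qform z A = (\<Sum>j\<in>{0..<n}. cnj (z $ j) * (a j * z $ j))"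
    unfolding qform_def Adef diagv[OF z] scalar_prod_def using z by simp
  also have "\<dots> = (\<Sum>j\<in>{0..<n}. cnj (q $ j + b j / a j) * (a j * (q $ j + b j / a j)))"
    unfolding z_def using qn by (intro sum.cong, auto)
  finally have L: "Re (qform z A) = (\<Sum>j\<in>{0..<n}. Re (cnj (q $ j + b j / a j) * (a j * (q $ j + b j / a j))))"
    by (simp add: Re_sum)
  have "Re (\<Sum>m \<in> {0..<M} - {k}. qform (unit_vec M m + qent k q m \<cdot>\<^sub>v unit_vec M k) (Vf m))
     = (\<Sum>j\<in>{0..<n}. Re (qform (unit_vec M (idx k j) + q $ j \<cdot>\<^sub>v unit_vec M k) (Vf (idx k j))))"
    unfolding sum_idx[OF k] Re_sum n_def[symmetric]
    by (rule sum.cong, auto simp: qent_ridx idx_facts(3)[OF k] n_def)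
  also have "\<dots> = (\<Sum>j\<in>{0..<n}. Re (Vf (idx k j) $$ (idx k j, idx k j) + q $ j * cnj (b j) + cnj (q $ j) * b j + cnj (q $ j) * q $ j * a j))"
  proof (rule sum.cong[OF refl])
    fix j assume "j \<in> {0..<n}"
    hence j: "j < n" by simp
    show "Re (qform (unit_vec M (idx k j) + q $ j \<cdot>\<^sub>v unit_vec M k) (Vf (idx k j))) = Re (Vf (idx k j) $$ (idx k j, idx k j) + q $ j * cnj (b j) + cnj (q $ j) * b j + cnj (q $ j) * q $ j * a j)"
      unfolding qform_two[OF Vc[OF j] idx_facts(1)[OF k j[unfolded n_def]] k] bc[OF j]
      unfolding a_def b_def by simp
  qed
  finally have R: "Re (\<Sum>m \<in> {0..<M} - {k}. qform (unit_vec M m + qent k q m \<cdot>\<^sub>v unit_vec M k) (Vf m)) = \<dots>" .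
  have pt: "Re (cnj (q $ j + b j / a j) * (a j * (q $ j + b j / a j)))
     = Re (Vf (idx k j) $$ (idx k j, idx k j) + q $ j * cnj (b j) + cnj (q $ j) * b j + cnj (q $ j) * q $ j * a j)
       + Re (b j * cnj (b j) / a j - Vf (idx k j) $$ (idx k j, idx k j))" if j: "j < n" for j
  proof -
    have "cnj (q $ j + b j / a j) * (a j * (q $ j + b j / a j))
      = (Vf (idx k j) $$ (idx k j, idx k j) + q $ j * cnj (b j) + cnj (q $ j) * b j + cnj (q $ j) * q $ j * a j)
       + (b j * cnj (b j) / a j - Vf (idx k j) $$ (idx k j, idx k j))"
      using a0[OF j] ar[OF j] by (simp add: field_simps)
    thus ?thesis by simp
  qed
  have "(\<Sum>j\<in>{0..<n}. Re (cnj (q $ j + b j / a j) * (a j * (q $ j + b j / a j))))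
     = (\<Sum>j\<in>{0..<n}. Re (Vf (idx k j) $$ (idx k j, idx k j) + q $ j * cnj (b j) + cnj (q $ j) * b j + cnj (q $ j) * q $ j * a j)
       + Re (b j * cnj (b j) / a j - Vf (idx k j) $$ (idx k j, idx k j)))"
    by (rule sum.cong[OF refl], rule pt, simp)
  also have "\<dots> = (\<Sum>j\<in>{0..<n}. Re (Vf (idx k j) $$ (idx k j, idx k j) + q $ j * cnj (b j) + cnj (q $ j) * b j + cnj (q $ j) * q $ j * a j))
       + (\<Sum>j\<in>{0..<n}. Re (b j * cnj (b j) / a j - Vf (idx k j) $$ (idx k j, idx k j)))"
    by (rule sum.distrib)
  finally have F: "Re (qform z A) = Re (\<Sum>m \<in> {0..<M} - {k}. qform (unit_vec M m + qent k q m \<cdot>\<^sub>v unit_vec M k) (Vf m))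
       + (\<Sum>j\<in>{0..<n}. Re (b j * cnj (b j) / a j - Vf (idx k j) $$ (idx k j, idx k j)))"
    unfolding L R .
  have "Re (qform (q + minv A *\<^sub>v bvec M k Vf) A) = Re (\<Sum>m \<in> {0..<M} - {k}. qform (unit_vec M m + qent k q m \<cdot>\<^sub>v unit_vec M k) (Vf m))
       + (\<Sum>j\<in>{0..<n}. Re (b j * cnj (b j) / a j - Vf (idx k j) $$ (idx k j, idx k j)))"
    unfolding w using F unfolding z_def .
  thus ?thesis unfolding A_def n_def a_def b_def .
qed


definition Gval :: "nat \<Rightarrow> nat \<Rightarrow> (nat \<Rightarrow> complex mat) \<Rightarrow> complex vec \<Rightarrow> real" where
  "Gval M k V q = Re (\<Sum>m \<in> {0..<M} - {k}. qform (unit_vec M m + qent k q m \<cdot>\<^sub>v unit_vec M k) (V m))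
     + 1 - ln (Re (qform (qtil M k q) (minv (V k))))"

definition ustar :: "nat \<Rightarrow> nat \<Rightarrow> (nat \<Rightarrow> complex mat) \<Rightarrow> complex vec \<Rightarrow> real \<Rightarrow> complex vec" where
  "ustar M k V q \<theta> = (exp (\<i> * complex_of_real \<theta>)
                / complex_of_real (sqrt (Re (qform (qtil M k q) (minv (V k))))))
               \<cdot>\<^sub>v (minv (V k) *\<^sub>v qtil M k q)"

lemma ell2_facts:
  assumes k: "k < M" and hV: "hermitian_pd M (V k)" and q: "q \<in> carrier_vec (M - 1)"
  shows "\<And>u. u \<in> carrier_vec M \<Longrightarrow> det (Tk M k u q) \<noteq> 0 \<Longrightarrow> ell2 M k V u q \<ge> Gval M k V q"
    and "\<And>u. u \<in> carrier_vec M \<Longrightarrow> det (Tk M k u q) \<noteq> 0 \<Longrightarrow> ell2 M k V u q = Gval M k V q \<Longrightarrow>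
           \<exists>\<theta> \<in> {0..2*pi}. u = ustar M k V q \<theta>"
    and "\<And>\<theta>. ustar M k V q \<theta> \<in> carrier_vec M"
    and "\<And>\<theta>. det (Tk M k (ustar M k V q \<theta>) q) \<noteq> 0"
    and "\<And>\<theta>. ell2 M k V (ustar M k V q \<theta>) q = Gval M k V q"
proof -
  define Q where "Q = qtil M k q"
  have Q: "Q \<in> carrier_vec M" unfolding Q_def by (rule qtil_carrier[OF k q])
  have Q0: "Q \<noteq> 0\<^sub>v M"
  proof
    assume "Q = 0\<^sub>v M"
    hence "Q $ k = 0" using k by simp
    thus False unfolding Q_def qtil_explicit[OF k q] using k by simp
  qed
  note C = core[OF hV Q Q0]
  have dT: "det (Tk M k u q) = cnj (cconj_vec Q \<bullet> u)" if "u \<in> carrier_vec M" for u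
    unfolding Q_def by (rule det_Tk_qtil[OF k that q])
  have el: "ell2 M k V u q = Re (\<Sum>m \<in> {0..<M} - {k}. qform (unit_vec M m + qent k q m \<cdot>\<^sub>v unit_vec M k) (V m))
      + (Re (qform u (V k)) - 2 * ln (cmod (cconj_vec Q \<bullet> u)))" if u: "u \<in> carrier_vec M" for u
    unfolding ell2_def dT[OF u] complex_mod_cnj by simp
  have G: "Gval M k V q = Re (\<Sum>m \<in> {0..<M} - {k}. qform (unit_vec M m + qent k q m \<cdot>\<^sub>v unit_vec M k) (V m))
     + (1 - ln (Re (qform Q (minv (V k)))))" unfolding Gval_def Q_def by simp
  have us: "ustar M k V q \<theta> = (exp (\<i> * complex_of_real \<theta>) / complex_of_real (sqrt (Re (qform Q (minv (V k)))))) \<cdot>\<^sub>v (minv (V k) *\<^sub>v Q)" for \<theta>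
    unfolding ustar_def Q_def ..
  have c0: "det (Tk M k u q) \<noteq> 0 \<longleftrightarrow> cconj_vec Q \<bullet> u \<noteq> 0" if u: "u \<in> carrier_vec M" for u
    unfolding dT[OF u] by simp
  show "\<And>u. u \<in> carrier_vec M \<Longrightarrow> det (Tk M k u q) \<noteq> 0 \<Longrightarrow> ell2 M k V u q \<ge> Gval M k V q"
    using C(2) unfolding G by (simp add: el c0)
  show "\<exists>\<theta> \<in> {0..2*pi}. u = ustar M k V q \<theta>"
    if "u \<in> carrier_vec M" "det (Tk M k u q) \<noteq> 0" "ell2 M k V u q = Gval M k V q" for u
    using C(3)[of u] that unfolding us G el[OF that(1)] c0[OF that(1)] by simp
  show "ustar M k V q \<theta> \<in> carrier_vec M" for \<theta> unfolding us by (rule C(4))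
  show "det (Tk M k (ustar M k V q \<theta>) q) \<noteq> 0" for \<theta> unfolding c0[OF C(4)[of \<theta>, folded us]]
    unfolding us by (rule C(5))
  show "ell2 M k V (ustar M k V q \<theta>) q = Gval M k V q" for \<theta>
    unfolding el[OF C(4)[of \<theta>, folded us]] G unfolding us using C(6)[of \<theta>] by simp
qed

lemma fq_G:
  assumes k: "k < M" and hV: "\<And>m. m < M \<Longrightarrow> hermitian_pd M (V m)" and q: "q \<in> carrier_vec (M - 1)"
  shows "fq M k V q = Gval M k V q + ((\<Sum>j\<in>{0..<M - 1}. Re (V (idx k j) $$ (k, idx k j) * cnj (V (idx k j) $$ (k, idx k j)) / V (idx k j) $$ (k, k)
           - V (idx k j) $$ (idx k j, idx k j))) - 1)"
  unfolding fq_def Gval_def using Aside[where Vf=V, OF k hV q] Cside[where Vf=V, OF k hV[OF k] q] by simp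

theorem theorem1:
  fixes M k :: nat and V :: "nat \<Rightarrow> complex mat"
  assumes "M \<ge> 2" and "k < M"
    and "\<And>m. m < M \<Longrightarrow> hermitian_pd M (V m)"
  shows "(\<forall>q \<in> carrier_vec (M - 1). \<forall>u \<in> carrier_vec M.
            (det (Tk M k u q) \<noteq> 0 \<and>
             (\<forall>u' \<in> carrier_vec M. det (Tk M k u' q) \<noteq> 0 \<longrightarrow> ell2 M k V u q \<le> ell2 M k V u' q))
            \<longleftrightarrow>
            (\<exists>\<theta> \<in> {0..2*pi}. u =
               (exp (\<i> * complex_of_real \<theta>)
                / complex_of_real (sqrt (Re (qform (qtil M k q) (minv (V k))))))
               \<cdot>\<^sub>v (minv (V k) *\<^sub>v qtil M k q)))
       \<and> (\<forall>q \<in> carrier_vec (M - 1).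
            (\<exists>u \<in> carrier_vec M. det (Tk M k u q) \<noteq> 0 \<and>
               (\<forall>u' \<in> carrier_vec M. \<forall>q' \<in> carrier_vec (M - 1).
                  det (Tk M k u' q') \<noteq> 0 \<longrightarrow> ell2 M k V u q \<le> ell2 M k V u' q'))
            \<longleftrightarrow> (\<forall>q' \<in> carrier_vec (M - 1). fq M k V q \<le> fq M k V q'))"
proof -
  note k = assms(2)
  note hV = assms(3)
  note F = ell2_facts[where V=V, OF k hV[OF k]]
  have P1: "(det (Tk M k u q) \<noteq> 0 \<and>
             (\<forall>u' \<in> carrier_vec M. det (Tk M k u' q) \<noteq> 0 \<longrightarrow> ell2 M k V u q \<le> ell2 M k V u' q))
            \<longleftrightarrow> (\<exists>\<theta> \<in> {0..2*pi}. u = ustar M k V q \<theta>)"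
    if q: "q \<in> carrier_vec (M - 1)" and u: "u \<in> carrier_vec M" for q u
  proof
    assume a: "det (Tk M k u q) \<noteq> 0 \<and> (\<forall>u' \<in> carrier_vec M. det (Tk M k u' q) \<noteq> 0 \<longrightarrow> ell2 M k V u q \<le> ell2 M k V u' q)"
    have "ell2 M k V u q \<le> Gval M k V q"
      using a F(3,4,5)[OF q, of 0] by metis
    hence "ell2 M k V u q = Gval M k V q" using F(1)[OF q u] a by simp
    thus "\<exists>\<theta> \<in> {0..2*pi}. u = ustar M k V q \<theta>" using F(2)[OF q u] a by simp
  next
    assume "\<exists>\<theta> \<in> {0..2*pi}. u = ustar M k V q \<theta>"
    then obtain \<theta> where u: "u = ustar M k V q \<theta>" by auto
    show "det (Tk M k u q) \<noteq> 0 \<and> (\<forall>u' \<in> carrier_vec M. det (Tk M k u' q) \<noteq> 0 \<longrightarrow> ell2 M k V u q \<le> ell2 M k V u' q)"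
      unfolding u using F(4,5)[OF q, of \<theta>] F(1)[OF q] by simp
  qed
  have P2: "(\<exists>u \<in> carrier_vec M. det (Tk M k u q) \<noteq> 0 \<and>
               (\<forall>u' \<in> carrier_vec M. \<forall>q' \<in> carrier_vec (M - 1).
                  det (Tk M k u' q') \<noteq> 0 \<longrightarrow> ell2 M k V u q \<le> ell2 M k V u' q'))
            \<longleftrightarrow> (\<forall>q' \<in> carrier_vec (M - 1). fq M k V q \<le> fq M k V q')"
    if q: "q \<in> carrier_vec (M - 1)" for q
  proof
    assume "\<exists>u \<in> carrier_vec M. det (Tk M k u q) \<noteq> 0 \<and>
               (\<forall>u' \<in> carrier_vec M. \<forall>q' \<in> carrier_vec (M - 1).
                  det (Tk M k u' q') \<noteq> 0 \<longrightarrow> ell2 M k V u q \<le> ell2 M k V u' q')"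
    then obtain u where u: "u \<in> carrier_vec M" "det (Tk M k u q) \<noteq> 0"
      and opt: "\<And>u' q'. u' \<in> carrier_vec M \<Longrightarrow> q' \<in> carrier_vec (M - 1) \<Longrightarrow>
                  det (Tk M k u' q') \<noteq> 0 \<Longrightarrow> ell2 M k V u q \<le> ell2 M k V u' q'" by blast
    show "\<forall>q' \<in> carrier_vec (M - 1). fq M k V q \<le> fq M k V q'"
    proof
      fix q' :: "complex vec" assume q': "q' \<in> carrier_vec (M - 1)"
      have "Gval M k V q \<le> ell2 M k V u q" using F(1)[OF q u] .
      also have "\<dots> \<le> ell2 M k V (ustar M k V q' 0) q'" using opt[OF F(3)[OF q'] q' F(4)[OF q']] .
      also have "\<dots> = Gval M k V q'" using F(5)[OF q'] .
      finally show "fq M k V q \<le> fq M k V q'" using fq_G[where V=V, OF k hV q] fq_G[where V=V, OF k hV q'] by simp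
    qed
  next
    assume a: "\<forall>q' \<in> carrier_vec (M - 1). fq M k V q \<le> fq M k V q'"
    have G: "Gval M k V q \<le> Gval M k V q'" if q': "q' \<in> carrier_vec (M - 1)" for q' :: "complex vec"
    proof -
      have "fq M k V q \<le> fq M k V q'" using a q' by blast
      thus ?thesis using fq_G[where V=V, OF k hV q] fq_G[where V=V, OF k hV q'] by simp
    qed
    show "\<exists>u \<in> carrier_vec M. det (Tk M k u q) \<noteq> 0 \<and>
               (\<forall>u' \<in> carrier_vec M. \<forall>q' \<in> carrier_vec (M - 1).
                  det (Tk M k u' q') \<noteq> 0 \<longrightarrow> ell2 M k V u q \<le> ell2 M k V u' q')"
    proof (intro bexI[of _ "ustar M k V q 0"] conjI ballI impI)
      show "ustar M k V q 0 \<in> carrier_vec M" by (rule F(3)[OF q])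
      show "det (Tk M k (ustar M k V q 0) q) \<noteq> 0" by (rule F(4)[OF q])
      fix u' q' :: "complex vec" assume u': "u' \<in> carrier_vec M" and q': "q' \<in> carrier_vec (M - 1)" and d: "det (Tk M k u' q') \<noteq> 0"
      show "ell2 M k V (ustar M k V q 0) q \<le> ell2 M k V u' q'"
        using F(5)[OF q, of 0] G[OF q'] F(1)[OF q' u' d] by simp
    qed
  qed
  show ?thesis using P1 P2 unfolding ustar_def by blast
qed

end
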